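(* Let $(X,\phi)$ be a uniformly Lipschitz flow on a compact metric space $(X,d)$, let $L=L(1)$, and let $\mu\in\mathcal{M}(X)$. Then for every $\delta\in(0,1)$ and every $\epsilon>0$, \begin{align*} \overline{h}^K_\mu(\epsilon,\delta,\phi_1)\le\overline{h}^K_\mu(\epsilon,\delta,\phi)\le\overline{h}^K_\mu(\epsilon/L,\delta,\phi_1),\\ \underline{h}^K_\mu(\epsilon,\delta,\phi_1)\le\underline{h}^K_\mu(\epsilon,\delta,\phi)\le\underline{h}^K_\mu(\epsilon/L,\delta,\phi_1). \end{align*}
   Context: A flow: $\phi:X\times\mathbb{R}\to X$ continuous, $\phi_t(x)=\phi(x,t)$, $\phi_0=\mathrm{id}$, $\phi_{t+s}=\phi_t\circ\phi_s$. Uniformly Lipschitz: for every $t_0>0$ there is $L(t_0)>0$ such that for all $\epsilon>0$ and $x,y\in X$, $d(x,y)\le\epsilon/L(t_0)$ implies $d(\phi_sx,\phi_sy)<\epsilon$ for all $s\in[0,t_0]$. $\mathcal{M}(X)$: Borel probability measures on $X$. Balls: $B_t(x,\epsilon,\phi)=\{y:d(\phi_sx,\phi_sy)<\epsilon\ \forall s\in[0,t]\}$, $B_n(x,\epsilon,\phi_1)=\{y:d(\phi_jx,\phi_jy)<\epsilon,\ j=0,\dots,n-1\}$. Katok entropies: $R^\delta_\mu(t,\epsilon,\phi)=\min\{\#E:E\subset X,\ \mu(\bigcup_{x\in E}B_t(x,\epsilon,\phi))>\delta\}$, $\overline{h}^K_\mu(\epsilon,\delta,\phi)=\limsup_{t\to\infty}\frac1t\log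 R^\delta_\mu(t,\epsilon,\phi)$, $\underline{h}^K_\mu(\epsilon,\delta,\phi)=\liminf_{t\to\infty}\frac1t\log R^\delta_\mu(t,\epsilon,\phi)$; $R^\delta_\mu(n,\epsilon,\phi_1)$, $\overline{h}^K_\mu(\epsilon,\delta,\phi_1)$, $\underline{h}^K_\mu(\epsilon,\delta,\phi_1)$ are defined in the same way using $B_n(x,\epsilon,\phi_1)$ and $n\in\mathbb{N}$, $n\to\infty$. *)

theory Defs
  imports "HOL-Probability.Probability"
begin

definition is_flow :: "('a::metric_space \<Rightarrow> real \<Rightarrow> 'a) \<Rightarrow> bool" where
  "is_flow phi \<longleftrightarrow>
     continuous_on UNIV (\<lambda>p. phi (fst p) (snd p)) \<and>
     (\<forall>x. phi x 0 = x) \<and>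
     (\<forall>x t s. phi x (t + s) = phi (phi x s) t)"

definition lip_const :: "('a::metric_space \<Rightarrow> real \<Rightarrow> 'a) \<Rightarrow> real \<Rightarrow> real \<Rightarrow> bool" where
  "lip_const phi t0 L \<longleftrightarrow> L > 0 \<and>
     (\<forall>eps>0. \<forall>x y. dist x y \<le> eps / L \<longrightarrow>
        (\<forall>s\<in>{0..t0}. dist (phi x s) (phi y s) < eps))"

definition unif_lipschitz_flow :: "('a::metric_space \<Rightarrow> real \<Rightarrow> 'a) \<Rightarrow> bool" where
  "unif_lipschitz_flow phi \<longleftrightarrow> (\<forall>t0>0. \<exists>L. lip_const phi t0 L)"

definition bowen_ball_flow :: "('a::metric_space \<Rightarrow> real \<Rightarrow> 'a) \<Rightarrow> real \<Rightarrow> 'a \<Rightarrow> real \<Rightarrow> 'a set" where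
  "bowen_ball_flow phi t x eps = {y. \<forall>s\<in>{0..t}. dist (phi x s) (phi y s) < eps}"

definition bowen_ball_map :: "('a::metric_space \<Rightarrow> 'a) \<Rightarrow> nat \<Rightarrow> 'a \<Rightarrow> real \<Rightarrow> 'a set" where
  "bowen_ball_map f n x eps = {y. \<forall>j<n. dist ((f ^^ j) x) ((f ^^ j) y) < eps}"

definition katok_R_flow :: "'a measure \<Rightarrow> ('a::metric_space \<Rightarrow> real \<Rightarrow> 'a) \<Rightarrow> real \<Rightarrow> real \<Rightarrow> real \<Rightarrow> nat" where
  "katok_R_flow M phi delta t eps =
     Inf {card E | E. finite E \<and> measure M (\<Union>x\<in>E. bowen_ball_flow phi t x eps) > delta}"

definition katok_R_map :: "'a measure \<Rightarrow> ('a::metric_space \<Rightarrow> 'a) \<Rightarrow> real \<Rightarrow> nat \<Rightarrow> real \<Rightarrow> nat" where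
  "katok_R_map M f delta n eps =
     Inf {card E | E. finite E \<and> measure M (\<Union>x\<in>E. bowen_ball_map f n x eps) > delta}"

definition upper_katok_flow :: "'a measure \<Rightarrow> ('a::metric_space \<Rightarrow> real \<Rightarrow> 'a) \<Rightarrow> real \<Rightarrow> real \<Rightarrow> ereal" where
  "upper_katok_flow M phi eps delta =
     Limsup at_top (\<lambda>t. ereal (ln (real (katok_R_flow M phi delta t eps)) / t))"

definition lower_katok_flow :: "'a measure \<Rightarrow> ('a::metric_space \<Rightarrow> real \<Rightarrow> 'a) \<Rightarrow> real \<Rightarrow> real \<Rightarrow> ereal" where
  "lower_katok_flow M phi eps delta =
     Liminf at_top (\<lambda>t. ereal (ln (real (katok_R_flow M phi delta t eps)) / t))"

definition upper_katok_map :: "'a measure \<Rightarrow> ('a::metric_space \<Rightarrow> 'a) \<Rightarrow> real \<Rightarrow> real \<Rightarrow> ereal" where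
  "upper_katok_map M f eps delta =
     limsup (\<lambda>n. ereal (ln (real (katok_R_map M f delta n eps)) / real n))"

definition lower_katok_map :: "'a measure \<Rightarrow> ('a::metric_space \<Rightarrow> 'a) \<Rightarrow> real \<Rightarrow> real \<Rightarrow> ereal" where
  "lower_katok_map M f eps delta =
     liminf (\<lambda>n. ereal (ln (real (katok_R_map M f delta n eps)) / real n))"

end

theory Submission imports Defs begin

lemma flow_iter:
  assumes "is_flow phi"
  shows "((\<lambda>x. phi x 1) ^^ j) y = phi y (real j)"
proof (induction j)
  case 0 then show ?case using assms by (simp add: is_flow_def)
next
  case (Suc j)
  have "phi y (1 + real j) = phi (phi y (real j)) 1" using assms unfolding is_flow_def by blast
  then show ?case using Suc by (simp add: add.commute)
qed

lemma flow_cont_x: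
  assumes "is_flow phi"
  shows "continuous_on UNIV (\<lambda>y. phi y s)"
proof -
  have c: "continuous_on UNIV (\<lambda>p. phi (fst p) (snd p))" using assms by (simp add: is_flow_def)
  have "continuous_on UNIV (\<lambda>y. (y, s))" by (intro continuous_intros)
  from continuous_on_compose[OF this, of "\<lambda>p. phi (fst p) (snd p)"] c
  show ?thesis by (simp add: o_def continuous_on_subset)
qed

lemma flow_cont_t:
  assumes "is_flow phi"
  shows "continuous_on UNIV (\<lambda>s. phi x s)"
proof -
  have c: "continuous_on UNIV (\<lambda>p. phi (fst p) (snd p))" using assms by (simp add: is_flow_def)
  have "continuous_on UNIV (\<lambda>s. (x, s))" by (intro continuous_intros)
  from continuous_on_compose[OF this, of "\<lambda>p. phi (fst p) (snd p)"] c
  show ?thesis by (simp add: o_def continuous_on_subset)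
qed

lemma open_map_ball:
  assumes "is_flow phi"
  shows "open (bowen_ball_map (\<lambda>x. phi x 1) n x e)"
proof -
  have "bowen_ball_map (\<lambda>x. phi x 1) n x e = (\<Inter>j\<in>{..<n}. {y. dist (phi x (real j)) (phi y (real j)) < e})"
    unfolding bowen_ball_map_def flow_iter[OF assms] by auto
  moreover have "open {y. dist (phi x (real j)) (phi y (real j)) < e}" for j
    by (rule open_Collect_less) (intro continuous_intros flow_cont_x[OF assms])+
  ultimately show ?thesis by auto
qed

lemma open_flow_ball:
  assumes fl: "is_flow phi" and ul: "unif_lipschitz_flow phi"
  shows "open (bowen_ball_flow phi t x e)"
proof (cases "t < 0")
  case True
  then have "bowen_ball_flow phi t x e = UNIV" by (auto simp: bowen_ball_flow_def)
  then show ?thesis by simp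
next
  case False
  obtain K where K: "lip_const phi (max t 1) K" using ul unfolding unif_lipschitz_flow_def by force
  show ?thesis unfolding open_dist
  proof (intro ballI)
    fix y assume y: "y \<in> bowen_ball_flow phi t x e"
    have "continuous_on {0..t} (\<lambda>s. dist (phi x s) (phi y s))"
      by (intro continuous_intros continuous_on_subset[OF flow_cont_t[OF fl]]) auto
    then obtain s0 where s0: "s0 \<in> {0..t}" "\<forall>s\<in>{0..t}. dist (phi x s) (phi y s) \<le> dist (phi x s0) (phi y s0)"
      using continuous_attains_sup[of "{0..t}" "\<lambda>s. dist (phi x s) (phi y s)"] False by auto
    define m where "m = dist (phi x s0) (phi y s0)"
    have me: "m < e" using y s0 unfolding m_def bowen_ball_flow_def by auto
    have Kp: "K > 0" using K by (simp add: lip_const_def)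
    show "\<exists>r>0. \<forall>z. dist z y < r \<longrightarrow> z \<in> bowen_ball_flow phi t x e"
    proof (intro exI conjI allI impI)
      show "(e - m) / K > 0" using me Kp by simp
      fix z assume z: "dist z y < (e - m) / K"
      have "dist y z \<le> (e - m) / K" using z by (simp add: dist_commute)
      moreover have "\<forall>eps>0. \<forall>x y. dist x y \<le> eps / K \<longrightarrow>
        (\<forall>s\<in>{0..max t 1}. dist (phi x s) (phi y s) < eps)" using K unfolding lip_const_def by blast
      ultimately have "\<forall>s\<in>{0..max t 1}. dist (phi y s) (phi z s) < e - m"
        using me by simp
      then show "z \<in> bowen_ball_flow phi t x e" unfolding bowen_ball_flow_def
      proof (intro CollectI ballI)
        fix s assume "s \<in> {0..t}" and h: "\<forall>s\<in>{0..max t 1}. dist (phi y s) (phi z s) < e - m"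
        then have "dist (phi y s) (phi z s) < e - m" "dist (phi x s) (phi y s) \<le> m"
          using s0 unfolding m_def by auto
        then show "dist (phi x s) (phi z s) < e" using dist_triangle[of "phi x s" "phi z s" "phi y s"] by linarith
      qed
    qed
  qed
qed


lemma incl1:
  assumes fl: "is_flow phi" and "real n \<le> t + 1"
  shows "bowen_ball_flow phi t x e \<subseteq> bowen_ball_map (\<lambda>x. phi x 1) n x e"
proof
  fix y assume y: "y \<in> bowen_ball_flow phi t x e"
  show "y \<in> bowen_ball_map (\<lambda>x. phi x 1) n x e"
    unfolding bowen_ball_map_def flow_iter[OF fl]
  proof (intro CollectI allI impI)
    fix j assume "j < n"
    then have "real j \<in> {0..t}" using assms(2) by auto
    then show "dist (phi x (real j)) (phi y (real j)) < e" using y by (auto simp: bowen_ball_flow_def)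
  qed
qed

lemma incl2:
  assumes fl: "is_flow phi" and K: "lip_const phi 1 L" and n: "1 \<le> n" "t \<le> real n"
  shows "bowen_ball_map (\<lambda>x. phi x 1) n x (eps / L) \<subseteq> bowen_ball_flow phi t x eps"
proof
  fix y assume y: "y \<in> bowen_ball_map (\<lambda>x. phi x 1) n x (eps / L)"
  have yj: "\<And>j. j < n \<Longrightarrow> dist (phi x (real j)) (phi y (real j)) < eps / L"
    using y unfolding bowen_ball_map_def flow_iter[OF fl] by auto
  have Lk: "\<forall>eps>0. \<forall>x y. dist x y \<le> eps / L \<longrightarrow>
        (\<forall>s\<in>{0..1}. dist (phi x s) (phi y s) < eps)" using K unfolding lip_const_def by blast
  show "y \<in> bowen_ball_flow phi t x eps" unfolding bowen_ball_flow_def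
  proof (intro CollectI ballI)
    fix s assume s: "s \<in> {0..t}"
    define j where "j = min (nat (floor s)) (n - 1)"
    have jn: "j < n" using n unfolding j_def by auto
    have js: "real j \<le> s"
    proof -
      have "real (nat (floor s)) \<le> s" using s by simp
      moreover have "j \<le> nat (floor s)" unfolding j_def by simp
      ultimately show ?thesis by linarith
    qed
    have js2: "s - real j \<le> 1"
    proof (cases "nat (floor s) \<le> n - 1")
      case True then have "j = nat (floor s)" unfolding j_def by simp
      then show ?thesis using s by linarith
    next
      case False then have "j = n - 1" unfolding j_def by simp
      then show ?thesis using s n by auto
    qed
    have eq: "phi x s = phi (phi x (real j)) (s - real j)" "phi y s = phi (phi y (real j)) (s - real j)"
    proof -
      have "\<forall>x t s. phi x (t + s) = phi (phi x s) t" using fl unfolding is_flow_def by blast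
      then have "\<And>z. phi z (s - real j + real j) = phi (phi z (real j)) (s - real j)" by blast
      then show "phi x s = phi (phi x (real j)) (s - real j)" "phi y s = phi (phi y (real j)) (s - real j)"
        by simp_all
    qed
    have d: "dist (phi x (real j)) (phi y (real j)) \<le> eps / L" using yj[OF jn] by simp
    have Lp: "L > 0" using K by (simp add: lip_const_def)
    have "eps > 0"
    proof (rule ccontr)
      assume "\<not> eps > 0"
      then have "eps / L \<le> 0" using Lp by (simp add: divide_nonpos_pos)
      then show False using yj[OF jn] by (metis dist_not_less_zero order_less_le_trans)
    qed
    then have "\<forall>s\<in>{0..1}. dist (phi (phi x (real j)) s) (phi (phi y (real j)) s) < eps"
      using Lk d by blast
    moreover have "s - real j \<in> {0..1}" using js js2 by simp
    ultimately show "dist (phi x s) (phi y s) < eps" unfolding eq by blast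
  qed
qed

lemma cover:
  assumes cpt: "compact (UNIV :: 'a::metric_space set)" and ul: "unif_lipschitz_flow (phi :: 'a \<Rightarrow> real \<Rightarrow> 'a)"
    and e: "e > 0"
  shows "\<exists>E. finite E \<and> (\<Union>x\<in>E. bowen_ball_flow phi t x e) = UNIV"
proof -
  obtain K where K: "lip_const phi (max t 1) K" using ul unfolding unif_lipschitz_flow_def by force
  have Kp: "K > 0" using K by (simp add: lip_const_def)
  have Lk: "\<forall>eps>0. \<forall>x y. dist x y \<le> eps / K \<longrightarrow>
        (\<forall>s\<in>{0..max t 1}. dist (phi x s) (phi y s) < eps)" using K unfolding lip_const_def by blast
  have sub: "ball x (e / K) \<subseteq> bowen_ball_flow phi t x e" for x
  proof
    fix y assume "y \<in> ball x (e / K)"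
    then have "dist x y \<le> e / K" by simp
    then have "\<forall>s\<in>{0..max t 1}. dist (phi x s) (phi y s) < e" using Lk e by blast
    then show "y \<in> bowen_ball_flow phi t x e" unfolding bowen_ball_flow_def by auto
  qed
  have cb: "y \<in> ball y (e / K)" for y using e Kp by simp
  have "UNIV \<subseteq> (\<Union>x\<in>UNIV. ball x (e / K))" using cb by blast
  have u: "UNIV \<subseteq> (\<Union>x\<in>UNIV. ball x (e / K))" using cb by blast
  have "\<exists>E::'a set. finite E \<and> UNIV \<subseteq> (\<Union>x\<in>E. ball x (e / K))"
    apply (rule compactE_image[OF cpt, of UNIV "\<lambda>x. ball x (e / K)"])
    apply simp
    apply (rule u)
    by blast
  then obtain E :: "'a set" where E: "finite E" "UNIV \<subseteq> (\<Union>x\<in>E. ball x (e / K))" by blast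
  then have "(\<Union>x\<in>E. bowen_ball_flow phi t x e) = UNIV" using sub by blast
  then show ?thesis using E by blast
qed

lemma R_mono:
  fixes A B :: "'b \<Rightarrow> 'a set"
  assumes AB: "\<And>x. A x \<subseteq> B x" and Bm: "\<And>x. B x \<in> sets M" and fm: "finite_measure M"
    and ne: "\<exists>E. finite E \<and> measure M (\<Union>x\<in>E. A x) > d" and d: "d \<ge> 0"
  shows "Inf {card E | E. finite E \<and> measure M (\<Union>x\<in>E. B x) > d}
       \<le> Inf {card E | E. finite E \<and> measure M (\<Union>x\<in>E. A x) > d}"
proof -
  let ?SA = "{card E | E. finite E \<and> measure M (\<Union>x\<in>E. A x) > d}"
  let ?SB = "{card E | E. finite E \<and> measure M (\<Union>x\<in>E. B x) > d}"
  have "?SA \<noteq> {}" using ne by blast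
  then have "Inf ?SA \<in> ?SA" by (rule Inf_nat_def1)
  then obtain E where E: "Inf ?SA = card E" "finite E" "measure M (\<Union>x\<in>E. A x) > d" by blast
  have Am: "(\<Union>x\<in>E. A x) \<in> sets M"
  proof (rule ccontr)
    assume "(\<Union>x\<in>E. A x) \<notin> sets M"
    then have "measure M (\<Union>x\<in>E. A x) = 0" by (rule measure_notin_sets)
    then show False using E d by simp
  qed
  have BmE: "(\<Union>x\<in>E. B x) \<in> sets M" using Bm E(2) by auto
  have sub: "(\<Union>x\<in>E. A x) \<subseteq> (\<Union>x\<in>E. B x)" using AB by (simp add: UN_mono)
  have "measure M (\<Union>x\<in>E. A x) \<le> measure M (\<Union>x\<in>E. B x)"
    by (rule finite_measure.finite_measure_mono[OF fm sub BmE])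
  then have "finite E \<and> measure M (\<Union>x\<in>E. B x) > d" using E by linarith
  then have "card E \<in> ?SB" by blast
  then have "Inf ?SB \<le> card E" by (simp add: cInf_lower)
  then show ?thesis using E by simp
qed


lemma ln_nat_mono:
  assumes "a \<le> (b::nat)"
  shows "ln (real a) \<le> ln (real b)"
proof (cases "a = 0")
  case True
  then show ?thesis by (cases "b = 0") auto
next
  case False
  then show ?thesis using assms by simp
qed

lemma ln_nat_nonneg: "0 \<le> ln (real (a::nat))"
  by (cases "a = 0") auto

locale setting =
  fixes phi :: "'a::metric_space \<Rightarrow> real \<Rightarrow> 'a" and M :: "'a measure" and L delta :: real
  assumes cpt: "compact (UNIV :: 'a set)"
    and fl: "is_flow phi"
    and ul: "unif_lipschitz_flow phi"
    and K: "lip_const phi 1 L"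
    and ps: "prob_space M" and sM: "sets M = sets borel"
    and d0: "0 < delta" and d1: "delta < 1"
begin

lemma fm: "finite_measure M" using ps unfolding prob_space_def by blast

lemma spM: "space M = UNIV" using sets_eq_imp_space_eq[OF sM] by simp

lemma mUNIV: "measure M UNIV = 1" using prob_space.prob_space[OF ps] spM by simp

lemma flow_meas: "bowen_ball_flow phi t x e \<in> sets M"
  using open_flow_ball[OF fl ul] sM by simp

lemma map_meas: "bowen_ball_map (\<lambda>x. phi x 1) n x e \<in> sets M"
  using open_map_ball[OF fl] sM by simp

lemma R1:
  assumes e: "e > 0" and nt: "real n \<le> t + 1"
  shows "katok_R_map M (\<lambda>x. phi x 1) delta n e \<le> katok_R_flow M phi delta t e"
  unfolding katok_R_map_def katok_R_flow_def
proof (rule R_mono)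
  show "\<And>x. bowen_ball_flow phi t x e \<subseteq> bowen_ball_map (\<lambda>x. phi x 1) n x e"
    by (rule incl1[OF fl nt])
  show "\<And>x. bowen_ball_map (\<lambda>x. phi x 1) n x e \<in> sets M" by (rule map_meas)
  show "finite_measure M" by (rule fm)
  show "0 \<le> delta" using d0 by simp
  obtain E where E: "finite E" "(\<Union>x\<in>E. bowen_ball_flow phi t x e) = UNIV"
    using cover[OF cpt ul e] by blast
  then show "\<exists>E. finite E \<and> delta < measure M (\<Union>x\<in>E. bowen_ball_flow phi t x e)"
    using mUNIV d1 by auto
qed

lemma R2:
  assumes e: "e > 0" and n: "1 \<le> n" "t \<le> real n"
  shows "katok_R_flow M phi delta t e \<le> katok_R_map M (\<lambda>x. phi x 1) delta n (e / L)"
  unfolding katok_R_map_def katok_R_flow_def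
proof (rule R_mono)
  show "\<And>x. bowen_ball_map (\<lambda>x. phi x 1) n x (e / L) \<subseteq> bowen_ball_flow phi t x e"
    by (rule incl2[OF fl K n])
  show "\<And>x. bowen_ball_flow phi t x e \<in> sets M" by (rule flow_meas)
  show "finite_measure M" by (rule fm)
  show "0 \<le> delta" using d0 by simp
  have Lp: "L > 0" using K by (simp add: lip_const_def)
  then have eL: "e / L > 0" using e by simp
  obtain E where E: "finite E" "(\<Union>x\<in>E. bowen_ball_flow phi (real n) x (e / L)) = UNIV"
    using cover[OF cpt ul eL] by blast
  have "(\<Union>x\<in>E. bowen_ball_flow phi (real n) x (e / L)) \<subseteq> (\<Union>x\<in>E. bowen_ball_map (\<lambda>x. phi x 1) n x (e / L))"
    using incl1[OF fl, of n "real n"] by (simp add: UN_mono)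
  then have "(\<Union>x\<in>E. bowen_ball_map (\<lambda>x. phi x 1) n x (e / L)) = UNIV" using E by blast
  then show "\<exists>E. finite E \<and> delta < measure M (\<Union>x\<in>E. bowen_ball_map (\<lambda>x. phi x 1) n x (e / L))"
    using mUNIV d1 E(1) by auto
qed


lemma part1:
  assumes e: "eps > 0"
  shows "upper_katok_map M (\<lambda>x. phi x 1) eps delta \<le> upper_katok_flow M phi eps delta"
  unfolding upper_katok_map_def upper_katok_flow_def
proof (subst Limsup_le_iff, intro allI impI)
  let ?F = "\<lambda>t. ereal (ln (real (katok_R_flow M phi delta t eps)) / t)"
  fix y assume y: "Limsup at_top ?F < y"
  have "eventually (\<lambda>t. ?F t < y) at_top"
    using y Limsup_le_iff[where C="Limsup at_top ?F" and F=at_top and X="?F"] by auto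
  then obtain T where T: "\<And>t. t \<ge> T \<Longrightarrow> ?F t < y" by (auto simp: eventually_at_top_linorder)
  show "eventually (\<lambda>n. ereal (ln (real (katok_R_map M (\<lambda>x. phi x 1) delta n eps)) / real n) < y) sequentially"
    unfolding eventually_sequentially
  proof (intro exI allI impI)
    fix n assume n: "n \<ge> nat (ceiling T)"
    then have "real n \<ge> T" by linarith
    then have "?F (real n) < y" by (rule T)
    moreover have "ln (real (katok_R_map M (\<lambda>x. phi x 1) delta n eps)) / real n
        \<le> ln (real (katok_R_flow M phi delta (real n) eps)) / real n"
      by (intro divide_right_mono ln_nat_mono R1[OF e]) auto
    ultimately show "ereal (ln (real (katok_R_map M (\<lambda>x. phi x 1) delta n eps)) / real n) < y"
      by (meson ereal_less_eq(3) order_le_less_trans)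
  qed
qed

lemma part3:
  assumes e: "eps > 0"
  shows "lower_katok_map M (\<lambda>x. phi x 1) eps delta \<le> lower_katok_flow M phi eps delta"
  unfolding lower_katok_map_def lower_katok_flow_def
proof (subst le_Liminf_iff, intro allI impI)
  let ?m = "\<lambda>n. ereal (ln (real (katok_R_map M (\<lambda>x. phi x 1) delta n eps)) / real n)"
  fix y assume y: "y < liminf ?m"
  have "eventually (\<lambda>n. y < ?m n) sequentially"
    using y le_Liminf_iff[where C="liminf ?m" and F=sequentially and X="?m"] by auto
  then obtain N where N: "\<And>n. n \<ge> N \<Longrightarrow> y < ?m n" by (auto simp: eventually_sequentially)
  show "eventually (\<lambda>t. y < ereal (ln (real (katok_R_flow M phi delta t eps)) / t)) at_top"
    unfolding eventually_at_top_linorder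
  proof (intro exI allI impI)
    fix t assume t: "t \<ge> max (real N) 1"
    define n where "n = nat (floor t) + 1"
    have nN: "n \<ge> N" using t unfolding n_def by linarith
    have nt: "real n \<le> t + 1" "t \<le> real n" using t unfolding n_def by linarith+
    have tp: "t > 0" using t by simp
    have a: "ln (real (katok_R_map M (\<lambda>x. phi x 1) delta n eps)) / real n
        \<le> ln (real (katok_R_map M (\<lambda>x. phi x 1) delta n eps)) / t"
      by (rule divide_left_mono) (use ln_nat_nonneg nt tp in auto)
    have b: "ln (real (katok_R_map M (\<lambda>x. phi x 1) delta n eps)) / t
        \<le> ln (real (katok_R_flow M phi delta t eps)) / t"
      by (intro divide_right_mono ln_nat_mono R1[OF e nt(1)]) (use tp in auto)
    show "y < ereal (ln (real (katok_R_flow M phi delta t eps)) / t)"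
      using N[OF nN] a b by (meson ereal_less_eq(3) order_less_le_trans order_trans)
  qed
qed

lemma part4:
  assumes e: "eps > 0"
  shows "lower_katok_flow M phi eps delta \<le> lower_katok_map M (\<lambda>x. phi x 1) (eps / L) delta"
  unfolding lower_katok_map_def lower_katok_flow_def
proof (subst le_Liminf_iff, intro allI impI)
  let ?F = "\<lambda>t. ereal (ln (real (katok_R_flow M phi delta t eps)) / t)"
  fix y assume y: "y < Liminf at_top ?F"
  have "eventually (\<lambda>t. y < ?F t) at_top"
    using y le_Liminf_iff[where C="Liminf at_top ?F" and F=at_top and X="?F"] by auto
  then obtain T where T: "\<And>t. t \<ge> T \<Longrightarrow> y < ?F t" by (auto simp: eventually_at_top_linorder)
  show "eventually (\<lambda>n. y < ereal (ln (real (katok_R_map M (\<lambda>x. phi x 1) delta n (eps / L))) / real n)) sequentially"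
    unfolding eventually_sequentially
  proof (intro exI allI impI)
    fix n assume n: "n \<ge> max (nat (ceiling T)) 1"
    then have "real n \<ge> T" by linarith
    then have "y < ?F (real n)" by (rule T)
    moreover have "ln (real (katok_R_flow M phi delta (real n) eps)) / real n
        \<le> ln (real (katok_R_map M (\<lambda>x. phi x 1) delta n (eps / L))) / real n"
      by (intro divide_right_mono ln_nat_mono R2[OF e]) (use n in auto)
    ultimately show "y < ereal (ln (real (katok_R_map M (\<lambda>x. phi x 1) delta n (eps / L))) / real n)"
      by (meson ereal_less_eq(3) order_less_le_trans)
  qed
qed

lemma part2:
  assumes e: "eps > 0"
  shows "upper_katok_flow M phi eps delta \<le> upper_katok_map M (\<lambda>x. phi x 1) (eps / L) delta"
  unfolding upper_katok_map_def upper_katok_flow_def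
proof (subst Limsup_le_iff, intro allI impI)
  let ?m = "\<lambda>n. ereal (ln (real (katok_R_map M (\<lambda>x. phi x 1) delta n (eps / L))) / real n)"
  fix y assume y: "limsup ?m < y"
  obtain c1 where c1: "limsup ?m < ereal c1" "ereal c1 < y" using ereal_dense2[OF y] by blast
  obtain c2 where c2: "ereal c1 < ereal c2" "ereal c2 < y" using ereal_dense2[OF c1(2)] by blast
  have c12: "c1 < c2" using c2 by simp
  have "eventually (\<lambda>n. ?m n < ereal c1) sequentially"
    using c1 Limsup_le_iff[where C="limsup ?m" and F=sequentially and X="?m"] by auto
  then obtain N where N: "\<And>n. n \<ge> N \<Longrightarrow> ?m n < ereal c1" by (auto simp: eventually_sequentially)
  show "eventually (\<lambda>t. ereal (ln (real (katok_R_flow M phi delta t eps)) / t) < y) at_top"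
    unfolding eventually_at_top_linorder
  proof (intro exI allI impI)
    fix t assume t: "t \<ge> max (real N) (max 1 (\<bar>c1\<bar> / (c2 - c1)))"
    define n where "n = nat (ceiling t)"
    have tp: "t \<ge> 1" using t by simp
    have nN: "n \<ge> N" using t unfolding n_def by linarith
    have n1: "1 \<le> n" using tp unfolding n_def by linarith
    have nt: "t \<le> real n" "real n < t + 1" unfolding n_def using tp by linarith+
    define r where "r = ln (real (katok_R_map M (\<lambda>x. phi x 1) delta n (eps / L)))"
    have r0: "r \<ge> 0" unfolding r_def by (rule ln_nat_nonneg)
    have "r / real n < c1" using N[OF nN] unfolding r_def by simp
    then have rn: "r < c1 * real n" using n1 by (simp add: divide_less_eq)
    then have c1p: "c1 > 0" using r0 n1
      by (metis mult_nonpos_nonneg not_le of_nat_0_le_iff order_le_less_trans)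
    have tc: "c1 / t \<le> c2 - c1"
    proof -
      have "c1 / (c2 - c1) \<le> t" using t c1p by auto
      then show ?thesis using c12 tp by (simp add: divide_le_eq mult.commute)
    qed
    have "r / t < c1 * real n / t" using rn tp by (simp add: divide_strict_right_mono)
    also have "\<dots> \<le> c1 * (t + 1) / t" using nt c1p tp by (intro divide_right_mono mult_left_mono) auto
    also have "\<dots> = c1 + c1 / t" using tp by (simp add: field_simps)
    also have "\<dots> \<le> c2" using tc by simp
    finally have rt: "r / t < c2" .
    have "ln (real (katok_R_flow M phi delta t eps)) / t \<le> r / t"
      unfolding r_def by (intro divide_right_mono ln_nat_mono R2[OF e n1 nt(1)]) (use tp in auto)
    then have "ln (real (katok_R_flow M phi delta t eps)) / t < c2" using rt by linarith
    then show "ereal (ln (real (katok_R_flow M phi delta t eps)) / t) < y"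
    proof -
      assume h: "ln (real (katok_R_flow M phi delta t eps)) / t < c2"
      then have "ereal (ln (real (katok_R_flow M phi delta t eps)) / t) < ereal c2" by simp
      then show ?thesis using c2(2) by (rule less_trans)
    qed
  qed
qed

end

theorem proposition3p2:
  fixes phi :: "'a::metric_space \<Rightarrow> real \<Rightarrow> 'a"
    and M :: "'a measure" and L delta eps :: real
  assumes "compact (UNIV :: 'a set)"
    and "is_flow phi"
    and "unif_lipschitz_flow phi"
    and "lip_const phi 1 L"
    and "prob_space M" and "sets M = sets borel"
    and "0 < delta" and "delta < 1" and "eps > 0"
  shows "upper_katok_map M (\<lambda>x. phi x 1) eps delta \<le> upper_katok_flow M phi eps delta
       \<and> upper_katok_flow M phi eps delta \<le> upper_katok_map M (\<lambda>x. phi x 1) (eps / L) delta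
       \<and> lower_katok_map M (\<lambda>x. phi x 1) eps delta \<le> lower_katok_flow M phi eps delta
       \<and> lower_katok_flow M phi eps delta \<le> lower_katok_map M (\<lambda>x. phi x 1) (eps / L) delta"
proof -
  interpret S: setting phi M L delta
    unfolding setting_def using assms(1-8) by blast
  show ?thesis using S.part1 S.part2 S.part3 S.part4 assms(9) by blast
qed

end
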